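(* Consider the generative logic with $\mu\to1$ in the setting below. Let $\Omega$ and $\Delta$ be finite multisets of time-indexed formulas such that $E'(\Delta)=\emptyset$. Then $p(\Omega\mid\Delta)=p(\Omega)$.
   Context: Let $\mathcal{L}$ be a propositional language and let $K,T\ge1$. There are data sequences $d_1,\dots,d_K$; repetitions are allowed, and data are identified by their index $k$. Each $d_k$ is associated with a sequence of models $m(d_k)=(m(d_k)^1,\dots,m(d_k)^T)$ of $\mathcal{L}$. The prior is $p(d_k)=1/K$. A time-indexed formula is written $\alpha^t$, with $\alpha\in\mathcal{L}$ and $1\le t\le T$. Write $[\![\alpha^t]\!]_k=1$ if $\alpha$ is true in $m(d_k)^t$, and $0$ otherwise. For $\mu\in(0,1)$ and a finite multiset $X$ of time-indexed formulas, define $$p(X\mid d_k,\mu)=\prod_{\alpha^t\in X}\mu^{[\![\alpha^t]\!]_k}(1-\mu)^{1-[\![\alpha^t]\!]_k}.$$ Then define $$p(\Omega)=\lim_{\mu\to1}\sum_k p(\Omega\mid d_k,\mu)\,p(d_k)$$ and $$p(\Omega\mid\Delta)=\lim_{\mu\to1}\frac{\sum_k p(\Omega\mid d_k,\mu)\,p(\Delta\mid d_k,\mu)\,p(d_k)}{\sum_k p(\Delta\mid d_k,\mu)\,p(d_k)}.$$ An index $k$ is an evidence of $X$ if $[\![\alpha^t]\!]_k=1$ for all $\alpha^t\in X$. Let $E(X)$ be the set of such indices. $X$ is called founded if $E(X)\neq\emptyset$. Let $MFS(\Delta)$ be the set of nonempty founded sub-multisets $S\subseteq\Delta$ that have maximum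 cardinality among all nonempty founded sub-multisets of $\Delta$. Set $E'(\Delta)=\bigcup_{S\in MFS(\Delta)}E(S)$. This union is empty if $MFS(\Delta)=\emptyset$. Thus $E'(\Delta)=\emptyset$ iff no index is an evidence of any singleton of $\Delta$. *)

theory Defs
  imports Complex_Main "HOL-Library.Multiset"
begin

datatype 'v form = Atom 'v | Bot | Neg "'v form" | Conj "'v form" "'v form"
  | Disj "'v form" "'v form" | Imp "'v form" "'v form"

fun holds :: "('v \<Rightarrow> bool) \<Rightarrow> 'v form \<Rightarrow> bool" where
  "holds I (Atom v) = I v"
| "holds I Bot = False"
| "holds I (Neg a) = (\<not> holds I a)"
| "holds I (Conj a b) = (holds I a \<and> holds I b)"
| "holds I (Disj a b) = (holds I a \<or> holds I b)"
| "holds I (Imp a b) = (holds I a \<longrightarrow> holds I b)"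

(* A time-indexed formula alpha^t is a pair (alpha, t).
   m k t is the model m(d_k)^t; data indices are k < K, times 1 \<le> t \<le> T. *)
type_synonym 'v tform = "'v form \<times> nat"

definition sem :: "(nat \<Rightarrow> nat \<Rightarrow> ('v \<Rightarrow> bool)) \<Rightarrow> nat \<Rightarrow> 'v tform \<Rightarrow> nat" where
  "sem m k x = (if holds (m k (snd x)) (fst x) then 1 else 0)"

definition lik :: "(nat \<Rightarrow> nat \<Rightarrow> ('v \<Rightarrow> bool)) \<Rightarrow> 'v tform multiset \<Rightarrow> nat \<Rightarrow> real \<Rightarrow> real" where
  "lik m X k \<mu> = (\<Prod>x\<in>#X. \<mu> ^ sem m k x * (1 - \<mu>) ^ (1 - sem m k x))"

definition marg :: "nat \<Rightarrow> (nat \<Rightarrow> nat \<Rightarrow> ('v \<Rightarrow> bool)) \<Rightarrow> 'v tform multiset \<Rightarrow> real \<Rightarrow> real" where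
  "marg K m X \<mu> = (\<Sum>k<K. lik m X k \<mu> * (1 / real K))"

definition joint :: "nat \<Rightarrow> (nat \<Rightarrow> nat \<Rightarrow> ('v \<Rightarrow> bool)) \<Rightarrow> 'v tform multiset \<Rightarrow> 'v tform multiset \<Rightarrow> real \<Rightarrow> real" where
  "joint K m \<Omega> \<Delta> \<mu> = (\<Sum>k<K. lik m \<Omega> k \<mu> * lik m \<Delta> k \<mu> * (1 / real K))"

definition Ev :: "nat \<Rightarrow> (nat \<Rightarrow> nat \<Rightarrow> ('v \<Rightarrow> bool)) \<Rightarrow> 'v tform multiset \<Rightarrow> nat set" where
  "Ev K m X = {k. k < K \<and> (\<forall>x\<in>#X. sem m k x = 1)}"

definition founded :: "nat \<Rightarrow> (nat \<Rightarrow> nat \<Rightarrow> ('v \<Rightarrow> bool)) \<Rightarrow> 'v tform multiset \<Rightarrow> bool" where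
  "founded K m X \<longleftrightarrow> Ev K m X \<noteq> {}"

definition MFS :: "nat \<Rightarrow> (nat \<Rightarrow> nat \<Rightarrow> ('v \<Rightarrow> bool)) \<Rightarrow> 'v tform multiset \<Rightarrow> 'v tform multiset set" where
  "MFS K m \<Delta> = {S. S \<subseteq># \<Delta> \<and> S \<noteq> {#} \<and> founded K m S \<and>
      (\<forall>S'. S' \<subseteq># \<Delta> \<and> S' \<noteq> {#} \<and> founded K m S' \<longrightarrow> size S' \<le> size S)}"

definition Ev' :: "nat \<Rightarrow> (nat \<Rightarrow> nat \<Rightarrow> ('v \<Rightarrow> bool)) \<Rightarrow> 'v tform multiset \<Rightarrow> nat set" where
  "Ev' K m \<Delta> = (\<Union>S\<in>MFS K m \<Delta>. Ev K m S)"

end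

theory Submission
  imports Defs
begin

lemma sem_cases: "sem m k x = 0 \<or> sem m k x = 1"
  by (simp add: sem_def)

lemma Ev'_empty_cases:
  assumes "Ev' K m \<Delta> = {}"
  shows "\<Delta> = {#} \<or> (\<forall>k<K. \<forall>x\<in>#\<Delta>. sem m k x = 0)"
proof (rule ccontr)
  assume "\<not> ?thesis"
  then obtain k x where k: "k < K" and x: "x \<in># \<Delta>" and sx: "sem m k x \<noteq> 0" by blast
  hence s1: "sem m k x = 1" using sem_cases by metis
  let ?P = "\<lambda>S. S \<subseteq># \<Delta> \<and> S \<noteq> {#} \<and> founded K m S"
  have P1: "?P {#x#}" using k x s1 by (auto simp: founded_def Ev_def)
  have "\<forall>y. ?P y \<longrightarrow> size y < Suc (size \<Delta>)"
    by (auto dest: size_mset_mono)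
  from ex_has_greatest_nat[OF P1 this] obtain S where
    S: "?P S" "\<forall>y. ?P y \<longrightarrow> size y \<le> size S" by blast
  hence "S \<in> MFS K m \<Delta>" by (auto simp: MFS_def)
  moreover have "Ev K m S \<noteq> {}" using S by (auto simp: founded_def)
  ultimately show False using assms by (auto simp: Ev'_def)
qed

lemma lik_cont: "isCont (\<lambda>\<mu>. lik m X k \<mu>) a"
proof (induction X)
  case empty
  then show ?case by (simp add: lik_def)
next
  case (add x X)
  have "(\<lambda>\<mu>. lik m (add_mset x X) k \<mu>) =
        (\<lambda>\<mu>. (\<mu> ^ sem m k x * (1 - \<mu>) ^ (1 - sem m k x)) * lik m X k \<mu>)"
    by (simp add: lik_def)
  then show ?case using add by (simp add: continuous_intros)
qed

lemma lik_zero: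
  assumes "\<forall>x\<in>#X. sem m k x = 0"
  shows "lik m X k \<mu> = (1 - \<mu>) ^ size X"
  using assms by (induction X) (auto simp: lik_def)

lemma marg_lim: "(marg K m \<Omega> \<longlongrightarrow> marg K m \<Omega> 1) (at_left 1)"
proof -
  have "isCont (marg K m \<Omega>) 1"
    unfolding marg_def[abs_def] by (intro continuous_intros lik_cont)
  hence "(marg K m \<Omega> \<longlongrightarrow> marg K m \<Omega> 1) (at 1)" by (simp add: isCont_def)
  thus ?thesis by (rule tendsto_mono[OF at_le, rotated]) simp
qed

theorem theorem2:
  fixes K T :: nat and m :: "nat \<Rightarrow> nat \<Rightarrow> ('v \<Rightarrow> bool)"
    and \<Omega> \<Delta> :: "'v tform multiset"
  assumes "K \<ge> 1" and "T \<ge> 1"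
    and "\<forall>x\<in>#\<Omega>. 1 \<le> snd x \<and> snd x \<le> T"
    and "\<forall>x\<in>#\<Delta>. 1 \<le> snd x \<and> snd x \<le> T"
    and "Ev' K m \<Delta> = {}"
  shows "\<exists>L. (marg K m \<Omega> \<longlongrightarrow> L) (at_left 1) \<and>
             ((\<lambda>\<mu>. joint K m \<Omega> \<Delta> \<mu> / marg K m \<Delta> \<mu>) \<longlongrightarrow> L) (at_left 1)"
proof (intro exI conjI)
  show "(marg K m \<Omega> \<longlongrightarrow> marg K m \<Omega> 1) (at_left 1)" by (rule marg_lim)
  have K: "real K > 0" using assms(1) by simp
  have ev: "\<forall>\<^sub>F \<mu> in at_left (1::real). joint K m \<Omega> \<Delta> \<mu> / marg K m \<Delta> \<mu> = marg K m \<Omega> \<mu>"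
  proof (rule eventually_at_leftI[of 0])
    fix \<mu> :: real assume \<mu>: "\<mu> \<in> {0<..<1}"
    show "joint K m \<Omega> \<Delta> \<mu> / marg K m \<Delta> \<mu> = marg K m \<Omega> \<mu>"
      using Ev'_empty_cases[OF assms(5)]
    proof
      assume "\<Delta> = {#}"
      thus ?thesis using K by (simp add: joint_def marg_def lik_def)
    next
      assume z: "\<forall>k<K. \<forall>x\<in>#\<Delta>. sem m k x = 0"
      have l: "\<And>k. k \<in> {..<K} \<Longrightarrow> lik m \<Delta> k \<mu> = (1 - \<mu>) ^ size \<Delta>"
        using z lik_zero by blast
      have j: "joint K m \<Omega> \<Delta> \<mu> = (1 - \<mu>) ^ size \<Delta> * marg K m \<Omega> \<mu>"
        unfolding joint_def marg_def sum_distrib_left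
        by (rule sum.cong) (auto simp: l)
      have mD: "marg K m \<Delta> \<mu> = (1 - \<mu>) ^ size \<Delta>"
        unfolding marg_def using K by (simp add: l)
      have "(1 - \<mu>) ^ size \<Delta> \<noteq> 0" using \<mu> by simp
      thus ?thesis using j mD by simp
    qed
  qed simp
  show "((\<lambda>\<mu>. joint K m \<Omega> \<Delta> \<mu> / marg K m \<Delta> \<mu>) \<longlongrightarrow> marg K m \<Omega> 1) (at_left 1)"
    by (rule Lim_transform_eventually[OF marg_lim]) (use ev in \<open>simp add: eventually_mono eq_commute\<close>)
qed

end
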